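(* Let $\mathcal{V}$ be a variety of algebras, $\mathcal{C}$ a full subcategory of the category of finitely generated free $\mathcal{V}$-algebras containing the free monogenic algebra $A_0$ on $x_0$, and $\Phi$ an automorphism of $\mathcal{C}$ with main function $(s^\Phi_A)$. Then there exists an element $\mathbf{t}(x_0)\in A_0$ (a term in the single variable $x_0$) such that for every $\mathcal{C}$-algebra $A$, $$s^\Phi_A(|A|)=\{\mathbf{t}(u)\mid u\in|\Phi(A)|\}.$$
   Context: Morphisms of $\mathcal{C}$ are all homomorphisms. For $a\in A$, $\alpha^A_a:A_0\to A$ is the homomorphism with $x_0\mapsto a$, and for $\mathbf{t}(x_0)\in A_0$ and $u$ in an algebra $B$, $\mathbf{t}(u):=\alpha^B_u(\mathbf{t}(x_0))$. Let $\eta^\Phi_0:\Phi^{-1}(A_0)\to A_0$ be the homomorphism sending every element of a fixed basis of $\Phi^{-1}(A_0)$ to $x_0$ (the identity if $\Phi(A_0)=A_0$), and $\eta^\Phi=\Phi(\eta^\Phi_0):A_0\to\Phi(A_0)$. The main function is $s^\Phi_A:|A|\to|\Phi(A)|$, $s^\Phi_A(a)=\Phi(\alpha^A_a)(\eta^\Phi(x_0))$. *)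

theory Defs
  imports Main
begin

record ('a, 'f) alg =
  car :: "'a set"
  ops :: "'f \<Rightarrow> 'a list \<Rightarrow> 'a"

definition is_alg :: "('f \<Rightarrow> nat) \<Rightarrow> ('a, 'f) alg \<Rightarrow> bool" where
  "is_alg ar A \<longleftrightarrow>
     (\<forall>f xs. length xs = ar f \<and> set xs \<subseteq> car A \<longrightarrow> ops A f xs \<in> car A)"

datatype ('f, 'v) trm = Var 'v | App 'f "('f, 'v) trm list"

fun wf_trm :: "('f \<Rightarrow> nat) \<Rightarrow> ('f, 'v) trm \<Rightarrow> bool" where
  "wf_trm ar (Var v) = True"
| "wf_trm ar (App f ts) = (length ts = ar f \<and> (\<forall>t\<in>set ts. wf_trm ar t))"

fun vars :: "('f, 'v) trm \<Rightarrow> 'v set" where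
  "vars (Var v) = {v}"
| "vars (App f ts) = (\<Union>t\<in>set ts. vars t)"

fun eval :: "('a, 'f) alg \<Rightarrow> ('v \<Rightarrow> 'a) \<Rightarrow> ('f, 'v) trm \<Rightarrow> 'a" where
  "eval A \<rho> (Var v) = \<rho> v"
| "eval A \<rho> (App f ts) = ops A f (map (eval A \<rho>) ts)"

fun subst :: "('v \<Rightarrow> ('f, 'w) trm) \<Rightarrow> ('f, 'v) trm \<Rightarrow> ('f, 'w) trm" where
  "subst \<sigma> (Var v) = \<sigma> v"
| "subst \<sigma> (App f ts) = App f (map (subst \<sigma>) ts)"

text \<open>A variety is given by a signature ar and a set E of identities (pairs of
  well-formed terms in the variables nat); its members are the models of E.\<close>

definition wf_eqns :: "('f \<Rightarrow> nat) \<Rightarrow> (('f, nat) trm \<times> ('f, nat) trm) set \<Rightarrow> bool" where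
  "wf_eqns ar E \<longleftrightarrow> (\<forall>(l, r)\<in>E. wf_trm ar l \<and> wf_trm ar r)"

definition models :: "('f \<Rightarrow> nat) \<Rightarrow> (('f, nat) trm \<times> ('f, nat) trm) set \<Rightarrow> ('a, 'f) alg \<Rightarrow> bool" where
  "models ar E A \<longleftrightarrow> is_alg ar A \<and>
     (\<forall>(l, r)\<in>E. \<forall>\<rho>. (\<forall>v. \<rho> v \<in> car A) \<longrightarrow> eval A \<rho> l = eval A \<rho> r)"

inductive derivable :: "('f \<Rightarrow> nat) \<Rightarrow> (('f, nat) trm \<times> ('f, nat) trm) set
    \<Rightarrow> ('f, 'v) trm \<Rightarrow> ('f, 'v) trm \<Rightarrow> bool"
  for ar E where
  drefl: "wf_trm ar t \<Longrightarrow> derivable ar E t t"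
| dsym: "derivable ar E s t \<Longrightarrow> derivable ar E t s"
| dtrans: "derivable ar E s t \<Longrightarrow> derivable ar E t u \<Longrightarrow> derivable ar E s u"
| dcong: "length ss = ar f \<Longrightarrow> list_all2 (derivable ar E) ss ts
            \<Longrightarrow> derivable ar E (App f ss) (App f ts)"
| dinst: "(l, r) \<in> E \<Longrightarrow> (\<forall>v. wf_trm ar (\<sigma> v))
            \<Longrightarrow> derivable ar E (subst \<sigma> l) (subst \<sigma> r)"

text \<open>A is a free algebra of the variety on the basis X: A lies in the variety,
  X generates A, and two terms over X take the same value in A (variables
  interpreted as themselves) only if they are equal in the variety, i.e. A is the
  relatively free algebra T(X)/(identities of the variety) with X as free generators.\<close>

definition free_on :: "('f \<Rightarrow> nat) \<Rightarrow> (('f, nat) trm \<times> ('f, nat) trm) set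
    \<Rightarrow> ('a, 'f) alg \<Rightarrow> 'a set \<Rightarrow> bool" where
  "free_on ar E A X \<longleftrightarrow> models ar E A \<and> X \<subseteq> car A \<and>
     (\<forall>a\<in>car A. \<exists>p. wf_trm ar p \<and> vars p \<subseteq> X \<and> eval A (\<lambda>x. x) p = a) \<and>
     (\<forall>p q. wf_trm ar p \<and> wf_trm ar q \<and> vars p \<subseteq> X \<and> vars q \<subseteq> X \<and>
        eval A (\<lambda>x. x) p = eval A (\<lambda>x. x) q \<longrightarrow> derivable ar E p q)"

definition fg_free :: "('f \<Rightarrow> nat) \<Rightarrow> (('f, nat) trm \<times> ('f, nat) trm) set
    \<Rightarrow> ('a, 'f) alg \<Rightarrow> bool" where
  "fg_free ar E A \<longleftrightarrow> (\<exists>X. finite X \<and> free_on ar E A X)"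

definition hom :: "('f \<Rightarrow> nat) \<Rightarrow> ('a, 'f) alg \<Rightarrow> ('a, 'f) alg \<Rightarrow> ('a \<Rightarrow> 'a) \<Rightarrow> bool" where
  "hom ar A B h \<longleftrightarrow> (\<forall>x\<in>car A. h x \<in> car B) \<and> (\<forall>x. x \<notin> car A \<longrightarrow> h x = undefined) \<and>
     (\<forall>f xs. length xs = ar f \<and> set xs \<subseteq> car A \<longrightarrow> h (ops A f xs) = ops B f (map h xs))"

definition idm :: "('a, 'f) alg \<Rightarrow> 'a \<Rightarrow> 'a" where
  "idm A = (\<lambda>x. if x \<in> car A then x else undefined)"

definition cmp :: "('a, 'f) alg \<Rightarrow> ('a \<Rightarrow> 'a) \<Rightarrow> ('a \<Rightarrow> 'a) \<Rightarrow> 'a \<Rightarrow> 'a" where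
  "cmp A g f = (\<lambda>x. if x \<in> car A then g (f x) else undefined)"

definition is_functor :: "('f \<Rightarrow> nat) \<Rightarrow> ('a, 'f) alg set
    \<Rightarrow> (('a, 'f) alg \<Rightarrow> ('a, 'f) alg)
    \<Rightarrow> (('a, 'f) alg \<Rightarrow> ('a, 'f) alg \<Rightarrow> ('a \<Rightarrow> 'a) \<Rightarrow> ('a \<Rightarrow> 'a)) \<Rightarrow> bool" where
  "is_functor ar C FO FM \<longleftrightarrow>
     (\<forall>A\<in>C. FO A \<in> C) \<and>
     (\<forall>A\<in>C. \<forall>B\<in>C. \<forall>h. hom ar A B h \<longrightarrow> hom ar (FO A) (FO B) (FM A B h)) \<and>
     (\<forall>A\<in>C. FM A A (idm A) = idm (FO A)) \<and>
     (\<forall>A\<in>C. \<forall>B\<in>C. \<forall>D\<in>C. \<forall>f g. hom ar A B f \<and> hom ar B D g \<longrightarrow>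
        FM A D (cmp A g f) = cmp (FO A) (FM B D g) (FM A B f))"

definition inverse_functors :: "('f \<Rightarrow> nat) \<Rightarrow> ('a, 'f) alg set
    \<Rightarrow> (('a, 'f) alg \<Rightarrow> ('a, 'f) alg)
    \<Rightarrow> (('a, 'f) alg \<Rightarrow> ('a, 'f) alg \<Rightarrow> ('a \<Rightarrow> 'a) \<Rightarrow> ('a \<Rightarrow> 'a))
    \<Rightarrow> (('a, 'f) alg \<Rightarrow> ('a, 'f) alg)
    \<Rightarrow> (('a, 'f) alg \<Rightarrow> ('a, 'f) alg \<Rightarrow> ('a \<Rightarrow> 'a) \<Rightarrow> ('a \<Rightarrow> 'a)) \<Rightarrow> bool" where
  "inverse_functors ar C FO FM GO GM \<longleftrightarrow>
     is_functor ar C FO FM \<and> is_functor ar C GO GM \<and>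
     (\<forall>A\<in>C. GO (FO A) = A \<and> FO (GO A) = A) \<and>
     (\<forall>A\<in>C. \<forall>B\<in>C. \<forall>h. hom ar A B h \<longrightarrow>
        GM (FO A) (FO B) (FM A B h) = h \<and> FM (GO A) (GO B) (GM A B h) = h)"

definition alpha :: "('f \<Rightarrow> nat) \<Rightarrow> ('a, 'f) alg \<Rightarrow> 'a \<Rightarrow> ('a, 'f) alg \<Rightarrow> 'a \<Rightarrow> 'a \<Rightarrow> 'a" where
  "alpha ar A0 x0 B u = (THE h. hom ar A0 B h \<and> h x0 = u)"

definition main_fun :: "('f \<Rightarrow> nat) \<Rightarrow> ('a, 'f) alg \<Rightarrow> 'a
    \<Rightarrow> (('a, 'f) alg \<Rightarrow> ('a, 'f) alg)
    \<Rightarrow> (('a, 'f) alg \<Rightarrow> ('a, 'f) alg \<Rightarrow> ('a \<Rightarrow> 'a) \<Rightarrow> ('a \<Rightarrow> 'a))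
    \<Rightarrow> ('a, 'f) alg \<Rightarrow> ('a \<Rightarrow> 'a) \<Rightarrow> ('a, 'f) alg \<Rightarrow> 'a \<Rightarrow> 'a" where
  "main_fun ar A0 x0 FO FM A0' eta0 A a =
     FM A0 A (alpha ar A0 x0 A a) (FM A0' A0 eta0 x0)"

end

theory Submission
  imports Defs
begin

lemma eval_in:
  assumes "is_alg ar B"
  shows "wf_trm ar p \<Longrightarrow> (\<forall>v\<in>vars p. \<rho> v \<in> car B) \<Longrightarrow> eval B \<rho> p \<in> car B"
proof (induction p)
  case (Var x) then show ?case by simp
next
  case (App f ts)
  have "set (map (eval B \<rho>) ts) \<subseteq> car B" using App by auto
  then show ?case using assms App.prems unfolding is_alg_def by auto
qed

lemma eval_cong: "(\<forall>v\<in>vars p. \<rho> v = \<rho>' v) \<Longrightarrow> eval B \<rho> p = eval B \<rho>' p"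
proof (induction p)
  case (App f ts)
  have "map (eval B \<rho>) ts = map (eval B \<rho>') ts" using App by (auto simp: map_eq_conv)
  then show ?case by (simp del: map_eq_conv)
qed simp

lemma eval_subst: "eval B \<rho> (subst \<sigma> t) = eval B (\<lambda>v. eval B \<rho> (\<sigma> v)) t"
proof (induction t)
  case (App f ts)
  have "map (eval B \<rho>) (map (subst \<sigma>) ts) = map (eval B (\<lambda>v. eval B \<rho> (\<sigma> v))) ts"
    using App by (auto simp: map_eq_conv)
  then show ?case by (simp del: map_eq_conv)
qed simp

lemma list_all2_map_eq:
  "list_all2 P xs ys \<Longrightarrow> (\<And>x y. P x y \<Longrightarrow> f x = g y) \<Longrightarrow> map f xs = map g ys"
  by (induction rule: list_all2_induct) auto

lemma sound:
  assumes M: "models ar E B" and R: "\<forall>v. \<rho> v \<in> car B"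
  shows "derivable ar E s t \<Longrightarrow> eval B \<rho> s = eval B \<rho> t"
proof (induction rule: derivable.induct)
  case (dcong ss f ts)
  have "map (eval B \<rho>) ss = map (eval B \<rho>) ts"
    using dcong(2) by (rule list_all2_map_eq) auto
  then show ?case by (simp del: map_eq_conv)
next
  case (dinst l r \<sigma>)
  have A: "is_alg ar B" using M unfolding models_def by auto
  have "\<forall>v. eval B \<rho> (\<sigma> v) \<in> car B" using dinst eval_in[OF A] R by blast
  then show ?case using dinst M unfolding models_def eval_subst by fastforce
qed auto

lemma hom_eval:
  assumes H: "hom ar A B h" and A: "is_alg ar A"
  shows "wf_trm ar p \<Longrightarrow> (\<forall>v\<in>vars p. \<rho> v \<in> car A) \<Longrightarrow> h (eval A \<rho> p) = eval B (h \<circ> \<rho>) p"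
proof (induction p)
  case (Var x) then show ?case by simp
next
  case (App f ts)
  have "\<forall>t\<in>set ts. eval A \<rho> t \<in> car A" using App.prems by (auto intro!: eval_in[OF A])
  then have "set (map (eval A \<rho>) ts) \<subseteq> car A" by auto
  then have "h (eval A \<rho> (App f ts)) = ops B f (map h (map (eval A \<rho>) ts))"
    using H App unfolding hom_def by auto
  also have "\<dots> = eval B (h \<circ> \<rho>) (App f ts)"
  proof -
    have "map h (map (eval A \<rho>) ts) = map (eval B (h \<circ> \<rho>)) ts" using App by (auto simp: map_eq_conv comp_def)
    then show ?thesis by (simp del: map_eq_conv)
  qed
  finally show ?case .
qed

lemma free_alg: "free_on ar E A X \<Longrightarrow> is_alg ar A"
  unfolding free_on_def models_def by auto

lemma hom_unique:
  assumes F: "free_on ar E A X" and H1: "hom ar A B h1" and H2: "hom ar A B h2"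
    and Ag: "\<forall>x\<in>X. h1 x = h2 x"
  shows "h1 = h2"
proof
  fix x
  show "h1 x = h2 x"
  proof (cases "x \<in> car A")
    case True
    then obtain p where p: "wf_trm ar p" "vars p \<subseteq> X" "eval A (\<lambda>x. x) p = x"
      using F unfolding free_on_def by blast
    have XA: "X \<subseteq> car A" using F unfolding free_on_def by auto
    have "h1 x = eval B (h1 \<circ> (\<lambda>x. x)) p"
      using hom_eval[OF H1 free_alg[OF F] p(1), where \<rho>="\<lambda>x. x"] p XA by auto
    also have "\<dots> = eval B (h2 \<circ> (\<lambda>x. x)) p" using Ag p(2) by (intro eval_cong) auto
    also have "\<dots> = h2 x"
      using hom_eval[OF H2 free_alg[OF F] p(1), where \<rho>="\<lambda>x. x"] p XA by (auto simp: subset_iff)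
    finally show ?thesis .
  next
    case False then show ?thesis using H1 H2 unfolding hom_def by auto
  qed
qed

lemma hom_exists:
  assumes F: "free_on ar E A X" and M: "models ar E B" and R: "\<forall>x\<in>X. \<rho> x \<in> car B"
  shows "\<exists>h. hom ar A B h \<and> (\<forall>x\<in>X. h x = \<rho> x)"
proof (cases "car B = {}")
  case True
  have XA: "X = {}" using R True by auto
  have AB: "is_alg ar B" using M unfolding models_def by auto
  have "car A = {}"
  proof (rule ccontr)
    assume "car A \<noteq> {}"
    then obtain a where "a \<in> car A" by auto
    then obtain p where p: "wf_trm ar p" "vars p \<subseteq> X"
      using F unfolding free_on_def by blast
    have "eval B \<rho> p \<in> car B" using eval_in[OF AB p(1)] p XA by auto
    then show False using True by auto
  qed
  moreover have "\<not> (length xs = ar f \<and> set xs \<subseteq> car A)" for f xs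
  proof
    assume a: "length xs = ar f \<and> set xs \<subseteq> car A"
    then have "ops A f xs \<in> car A" using free_alg[OF F] unfolding is_alg_def by blast
    then show False using \<open>car A = {}\<close> by auto
  qed
  ultimately have "hom ar A B (\<lambda>_. undefined)"
    unfolding hom_def by blast
  then show ?thesis using XA by auto
next
  case False
  then obtain b0 where b0: "b0 \<in> car B" by auto
  define \<rho>' where "\<rho>' = (\<lambda>v. if v \<in> X then \<rho> v else b0)"
  have R': "\<forall>v. \<rho>' v \<in> car B" using R b0 unfolding \<rho>'_def by auto
  define tm where "tm = (\<lambda>x. SOME p. wf_trm ar p \<and> vars p \<subseteq> X \<and> eval A (\<lambda>x. x) p = x)"
  have tm: "wf_trm ar (tm x) \<and> vars (tm x) \<subseteq> X \<and> eval A (\<lambda>x. x) (tm x) = x" if "x \<in> car A" for x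
  proof -
    have "\<exists>p. wf_trm ar p \<and> vars p \<subseteq> X \<and> eval A (\<lambda>x. x) p = x"
      using F that unfolding free_on_def by blast
    then show ?thesis unfolding tm_def by (rule someI_ex)
  qed
  have FD: "derivable ar E p q" if "wf_trm ar p" "wf_trm ar q" "vars p \<subseteq> X" "vars q \<subseteq> X"
     "eval A (\<lambda>x. x) p = eval A (\<lambda>x. x) q" for p q
    using F that unfolding free_on_def by blast
  have AB: "is_alg ar B" using M unfolding models_def by auto
  have AA: "is_alg ar A" using free_alg[OF F] .
  have XA: "X \<subseteq> car A" using F unfolding free_on_def by auto
  define h where "h = (\<lambda>x. if x \<in> car A then eval B \<rho>' (tm x) else undefined)"
  have key: "h x = eval B \<rho>' p" if "x \<in> car A" "wf_trm ar p" "vars p \<subseteq> X" "eval A (\<lambda>x. x) p = x" for x p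
  proof -
    have "derivable ar E (tm x) p" using FD tm[OF that(1)] that by auto
    then show ?thesis unfolding h_def using that(1) sound[OF M R'] by auto
  qed
  have "hom ar A B h"
    unfolding hom_def
  proof (intro conjI allI impI ballI)
    fix x assume "x \<in> car A"
    then show "h x \<in> car B" unfolding h_def using tm[of x] eval_in[OF AB, of "tm x" \<rho>'] R' by auto
  next
    fix x assume "x \<notin> car A" then show "h x = undefined" unfolding h_def by auto
  next
    fix f xs assume a: "length xs = ar f \<and> set xs \<subseteq> car A"
    have oc: "ops A f xs \<in> car A" using AA a unfolding is_alg_def by auto
    let ?p = "App f (map tm xs)"
    have wf: "wf_trm ar ?p" using a tm by auto
    have vs: "vars ?p \<subseteq> X" using a tm by fastforce
    have ev: "eval A (\<lambda>x. x) ?p = ops A f xs"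
    proof -
      have "map (eval A (\<lambda>x. x)) (map tm xs) = xs"
        using a tm by (auto simp: subset_iff intro!: map_idI)
      then show ?thesis by simp
    qed
    have "h (ops A f xs) = eval B \<rho>' ?p" using key[OF oc wf vs ev] .
    also have "\<dots> = ops B f (map h xs)"
    proof -
      have "map (eval B \<rho>') (map tm xs) = map h xs"
        using a unfolding h_def by (auto simp: subset_iff map_eq_conv)
      then show ?thesis by (simp del: map_eq_conv)
    qed
    finally show "h (ops A f xs) = ops B f (map h xs)" .
  qed
  moreover have "\<forall>x\<in>X. h x = \<rho> x"
  proof
    fix x assume x: "x \<in> X"
    have "h x = eval B \<rho>' (Var x)" using key[of x "Var x"] x XA by auto
    then show "h x = \<rho> x" using x unfolding \<rho>'_def by simp
  qed
  ultimately show ?thesis by blast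
qed

lemma alpha_unique:
  assumes F: "free_on ar E A0 {x0}" and H: "hom ar A0 B h"
  shows "alpha ar A0 x0 B (h x0) = h"
  unfolding alpha_def
proof (rule the_equality)
  show "hom ar A0 B h \<and> h x0 = h x0" using H by simp
next
  fix g assume "hom ar A0 B g \<and> g x0 = h x0"
  then show "g = h" using hom_unique[OF F _ H] by auto
qed

lemma alpha_hom:
  assumes F: "free_on ar E A0 {x0}" and M: "models ar E B" and u: "u \<in> car B"
  shows "hom ar A0 B (alpha ar A0 x0 B u) \<and> alpha ar A0 x0 B u x0 = u"
proof -
  obtain h where h: "hom ar A0 B h" "h x0 = u" using hom_exists[OF F M, of "\<lambda>_. u"] u by auto
  then show ?thesis using alpha_unique[OF F h(1)] by simp
qed

lemma hom_cmp: "is_alg ar A \<Longrightarrow> hom ar A B f \<Longrightarrow> hom ar B D g \<Longrightarrow> hom ar A D (cmp A g f)"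
proof -
  assume A: "is_alg ar A" and f: "hom ar A B f" and g: "hom ar B D g"
  show ?thesis unfolding hom_def
  proof (intro conjI allI impI ballI)
    fix x assume "x \<in> car A" then show "cmp A g f x \<in> car D"
      using f g unfolding hom_def cmp_def by auto
  next
    fix x assume "x \<notin> car A" then show "cmp A g f x = undefined" unfolding cmp_def by auto
  next
    fix fs xs assume a: "length xs = ar fs \<and> set xs \<subseteq> car A"
    have o: "ops A fs xs \<in> car A" using A a unfolding is_alg_def by blast
    have fx: "set (map f xs) \<subseteq> car B" "length (map f xs) = ar fs" using a f unfolding hom_def by auto
    have "cmp A g f (ops A fs xs) = g (f (ops A fs xs))" using o unfolding cmp_def by simp
    also have "\<dots> = g (ops B fs (map f xs))" using f a unfolding hom_def by auto
    also have "\<dots> = ops D fs (map g (map f xs))" using g fx unfolding hom_def by auto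
    also have "map g (map f xs) = map (cmp A g f) xs" using a unfolding cmp_def by (auto simp: map_eq_conv)
    finally show "cmp A g f (ops A fs xs) = ops D fs (map (cmp A g f) xs)" .
  qed
qed

lemma hom_idm: "is_alg ar A \<Longrightarrow> hom ar A A (idm A)"
proof -
  assume A: "is_alg ar A"
  show ?thesis unfolding hom_def
  proof (intro conjI allI impI ballI)
    fix fs xs assume a: "length xs = ar fs \<and> set xs \<subseteq> car A"
    have o: "ops A fs xs \<in> car A" using A a unfolding is_alg_def by blast
    have "map (idm A) xs = xs" using a unfolding idm_def by (auto simp: map_idI subset_iff)
    then show "idm A (ops A fs xs) = ops A fs (map (idm A) xs)" using o unfolding idm_def by simp
  qed (auto simp: idm_def)
qed


theorem theorem2:
  fixes ar :: "'f \<Rightarrow> nat"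
    and E :: "(('f, nat) trm \<times> ('f, nat) trm) set"
    and C :: "('a, 'f) alg set"
    and A0 :: "('a, 'f) alg" and x0 :: 'a
    and PhiO PsiO :: "('a, 'f) alg \<Rightarrow> ('a, 'f) alg"
    and PhiM PsiM :: "('a, 'f) alg \<Rightarrow> ('a, 'f) alg \<Rightarrow> ('a \<Rightarrow> 'a) \<Rightarrow> ('a \<Rightarrow> 'a)"
    and Bas :: "'a set" and eta0 :: "'a \<Rightarrow> 'a"
  assumes "wf_eqns ar E"
    and "\<forall>A\<in>C. fg_free ar E A"
    and "A0 \<in> C" and "free_on ar E A0 {x0}"
    and "inverse_functors ar C PhiO PhiM PsiO PsiM"
    and "free_on ar E (PsiO A0) Bas"
    and "hom ar (PsiO A0) A0 eta0" and "\<forall>b\<in>Bas. eta0 b = x0"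
    and "PhiO A0 = A0 \<longrightarrow> eta0 = idm A0"
  shows "\<exists>t\<in>car A0. \<forall>A\<in>C.
           main_fun ar A0 x0 PhiO PhiM (PsiO A0) eta0 A ` car A =
           {alpha ar A0 x0 (PhiO A) u t | u. u \<in> car (PhiO A)}"
proof -
  note FA0 = assms(4) and A0C = assms(3) and FP = assms(6) and eta = assms(7) and etab = assms(8)
  have Mod: "models ar E A" if "A \<in> C" for A
    using assms(2) that unfolding fg_free_def free_on_def by blast
  have Alg: "is_alg ar A" if "A \<in> C" for A using Mod[OF that] unfolding models_def by blast
  have FF: "is_functor ar C PhiO PhiM" and GF: "is_functor ar C PsiO PsiM"
    and invO: "\<forall>A\<in>C. PsiO (PhiO A) = A \<and> PhiO (PsiO A) = A"
    and invM: "\<forall>A\<in>C. \<forall>B\<in>C. \<forall>h. hom ar A B h \<longrightarrow>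
        PsiM (PhiO A) (PhiO B) (PhiM A B h) = h \<and> PhiM (PsiO A) (PsiO B) (PsiM A B h) = h"
    using assms(5) unfolding inverse_functors_def by auto
  have FO: "PhiO A \<in> C" if "A \<in> C" for A using FF that unfolding is_functor_def by blast
  have GO: "PsiO A \<in> C" if "A \<in> C" for A using GF that unfolding is_functor_def by blast
  have FH: "hom ar (PhiO A) (PhiO B) (PhiM A B h)" if "A \<in> C" "B \<in> C" "hom ar A B h" for A B h
    using FF that unfolding is_functor_def by blast
  have GH: "hom ar (PsiO A) (PsiO B) (PsiM A B h)" if "A \<in> C" "B \<in> C" "hom ar A B h" for A B h
    using GF that unfolding is_functor_def by blast
  have FI: "PhiM A A (idm A) = idm (PhiO A)" if "A \<in> C" for A
    using FF that unfolding is_functor_def by blast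
  have FC: "PhiM A D (cmp A g f) = cmp (PhiO A) (PhiM B D g) (PhiM A B f)"
    if "A \<in> C" "B \<in> C" "D \<in> C" "hom ar A B f" "hom ar B D g" for A B D f g
    using FF that unfolding is_functor_def by blast
  define P where "P = PsiO A0"
  have PC: "P \<in> C" unfolding P_def using GO A0C .
  have PhiP: "PhiO P = A0" unfolding P_def using invO A0C by blast
  have x0A0: "x0 \<in> car A0" using FA0 unfolding free_on_def by auto
  obtain \<sigma> where sig: "hom ar A0 P \<sigma>" and sigc: "cmp A0 eta0 \<sigma> = idm A0"
  proof (cases "Bas = {}")
    case False
    then obtain b where b: "b \<in> Bas" by auto
    have bP: "b \<in> car P" using b FP unfolding P_def free_on_def by auto
    have s: "hom ar A0 P (alpha ar A0 x0 P b)" "alpha ar A0 x0 P b x0 = b"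
      using alpha_hom[OF FA0 Mod[OF PC] bP] by auto
    have hc: "hom ar A0 A0 (cmp A0 eta0 (alpha ar A0 x0 P b))"
      using hom_cmp[OF Alg[OF A0C] s(1)] eta unfolding P_def by blast
    have "cmp A0 eta0 (alpha ar A0 x0 P b) x0 = x0"
      using s(2) x0A0 b etab unfolding cmp_def by auto
    then have "cmp A0 eta0 (alpha ar A0 x0 P b) = alpha ar A0 x0 A0 x0"
      using alpha_unique[OF FA0 hc] by simp
    also have "\<dots> = idm A0"
      using alpha_unique[OF FA0 hom_idm[OF Alg[OF A0C]]] x0A0 unfolding idm_def by simp
    finally show ?thesis using that s(1) by blast
  next
    case True
    have FP0: "free_on ar E P {}" using FP True unfolding P_def by simp
    obtain \<tau> where tau: "hom ar P (PsiO P) \<tau>" using hom_exists[OF FP0 Mod[OF GO[OF PC]], of id] by auto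
    have PP: "PhiO (PsiO P) = P" using invO PC by blast
    have s: "hom ar A0 P (PhiM P (PsiO P) \<tau>)" using FH[OF PC GO[OF PC] tau] PhiP PP by simp
    have uniq: "h1 = h2" if "hom ar A0 A0 h1" "hom ar A0 A0 h2" for h1 h2
    proof -
      have "PsiM A0 A0 h1 = PsiM A0 A0 h2"
        using hom_unique[OF FP0[unfolded P_def] GH[OF A0C A0C that(1)] GH[OF A0C A0C that(2)]] by simp
      moreover have "PhiM (PsiO A0) (PsiO A0) (PsiM A0 A0 h1) = h1"
        using bspec[OF bspec[OF invM A0C] A0C] that(1) by blast
      moreover have "PhiM (PsiO A0) (PsiO A0) (PsiM A0 A0 h2) = h2"
        using bspec[OF bspec[OF invM A0C] A0C] that(2) by blast
      ultimately show ?thesis by metis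
    qed
    have "cmp A0 eta0 (PhiM P (PsiO P) \<tau>) = idm A0"
      by (rule uniq[OF hom_cmp[OF Alg[OF A0C] s eta[folded P_def]] hom_idm[OF Alg[OF A0C]]])
    then show ?thesis using that s by blast
  qed
  define r where "r = PhiM P A0 eta0"
  define i where "i = PhiM A0 P \<sigma>"
  define e where "e = r x0"
  have etaP: "hom ar P A0 eta0" using eta unfolding P_def .
  have rH: "hom ar A0 (PhiO A0) r" unfolding r_def using FH[OF PC A0C etaP] PhiP by simp
  have iH: "hom ar (PhiO A0) A0 i" unfolding i_def using FH[OF A0C PC sig] PhiP by simp
  have eC: "e \<in> car (PhiO A0)" unfolding e_def using rH x0A0 unfolding hom_def by blast
  define t where "t = i e"
  have tC: "t \<in> car A0" unfolding t_def using iH eC unfolding hom_def by blast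
  have ret: "cmp (PhiO A0) r i = idm (PhiO A0)"
    using FC[OF A0C PC A0C sig etaP] FI[OF A0C] sigc unfolding r_def i_def by simp
  have rt: "r t = e" using fun_cong[OF ret, of e] eC unfolding t_def cmp_def idm_def by simp
  have mf: "main_fun ar A0 x0 PhiO PhiM (PsiO A0) eta0 A a = PhiM A0 A (alpha ar A0 x0 A a) e" for A a
    unfolding main_fun_def e_def r_def P_def ..
  show ?thesis
  proof (intro bexI[OF _ tC] ballI)
    fix A assume AC: "A \<in> C"
    have FAC: "PhiO A \<in> C" using FO[OF AC] .
    show "main_fun ar A0 x0 PhiO PhiM (PsiO A0) eta0 A ` car A =
           {alpha ar A0 x0 (PhiO A) u t | u. u \<in> car (PhiO A)}"
    proof (intro equalityI subsetI)
      fix y assume "y \<in> main_fun ar A0 x0 PhiO PhiM (PsiO A0) eta0 A ` car A"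
      then obtain a where a: "a \<in> car A" and y: "y = PhiM A0 A (alpha ar A0 x0 A a) e"
        using mf by auto
      define k where "k = PhiM A0 A (alpha ar A0 x0 A a)"
      have kH: "hom ar (PhiO A0) (PhiO A) k" unfolding k_def
        using FH[OF A0C AC] alpha_hom[OF FA0 Mod[OF AC] a] by blast
      define hk where "hk = cmp A0 k r"
      have hkH: "hom ar A0 (PhiO A) hk" unfolding hk_def using hom_cmp[OF Alg[OF A0C] rH kH] .
      have uC: "hk x0 \<in> car (PhiO A)" using hkH x0A0 unfolding hom_def by blast
      have "alpha ar A0 x0 (PhiO A) (hk x0) t = hk t" using alpha_unique[OF FA0 hkH] by simp
      also have "\<dots> = k e" unfolding hk_def cmp_def using tC rt by simp
      finally have "y = alpha ar A0 x0 (PhiO A) (hk x0) t" using y k_def by simp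
      then show "y \<in> {alpha ar A0 x0 (PhiO A) u t | u. u \<in> car (PhiO A)}" using uC by blast
    next
      fix y assume "y \<in> {alpha ar A0 x0 (PhiO A) u t | u. u \<in> car (PhiO A)}"
      then obtain u where u: "u \<in> car (PhiO A)" and y: "y = alpha ar A0 x0 (PhiO A) u t" by blast
      define h where "h = alpha ar A0 x0 (PhiO A) u"
      have hH: "hom ar A0 (PhiO A) h" unfolding h_def using alpha_hom[OF FA0 Mod[OF FAC] u] by blast
      define g where "g = cmp (PhiO A0) h i"
      have gH: "hom ar (PhiO A0) (PhiO A) g" unfolding g_def
        using hom_cmp[OF Alg[OF FO[OF A0C]] iH hH] .
      define g' where "g' = PsiM (PhiO A0) (PhiO A) g"
      have A0eq: "PsiO (PhiO A0) = A0" and Aeq: "PsiO (PhiO A) = A" using invO A0C AC by blast+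
      have g'H: "hom ar A0 A g'" unfolding g'_def using GH[OF FO[OF A0C] FAC gH] A0eq Aeq by simp
      have Pg': "PhiM A0 A g' = g" unfolding g'_def using bspec[OF bspec[OF invM FO[OF A0C]] FAC] gH A0eq Aeq by auto
      define a where "a = g' x0"
      have aC: "a \<in> car A" unfolding a_def using g'H x0A0 unfolding hom_def by blast
      have "main_fun ar A0 x0 PhiO PhiM (PsiO A0) eta0 A a = PhiM A0 A g' e"
        using mf alpha_unique[OF FA0 g'H] unfolding a_def by simp
      also have "\<dots> = h t" using Pg' eC unfolding g_def cmp_def t_def by simp
      finally show "y \<in> main_fun ar A0 x0 PhiO PhiM (PsiO A0) eta0 A ` car A"
        using y aC h_def by (metis image_eqI)
    qed
  qed
qed

end
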